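(* Let $H$ be a finite-dimensional Hopf algebra over $\mathbb{C}$ and $V$ a finite-dimensional left $H$-module. For $\omega\in\mathbb{C}$ with $|\omega|=1$ put $\mathrm{LKer}^{\omega}_V=\{h\in H\mid \sum h_1\otimes h_2\cdot v=\omega\, h\otimes v\ \ \forall v\in V\}$, and $\mathrm{LKer}_V=\mathrm{LKer}^1_V$. Then: (i) if $\mathrm{LKer}^{\omega}_V\neq0$, it is a left coideal of $H$ stable under the left adjoint action $h\cdot a=\sum h_1aS(h_2)$; (ii) $\mathrm{LKer}^{\omega}_V\,\mathrm{LKer}^{\omega'}_V\subset\mathrm{LKer}^{\omega\omega'}_V$; (iii) if $\omega^l=1$ then $\mathrm{LKer}^{\omega}_V\subset\mathrm{LKer}_{V^{\otimes l}}$ (with $H$ acting diagonally on $V^{\otimes l}$); (iv) $\bigoplus_{\omega}\mathrm{LKer}^{\omega}_V$ (sum over all $\omega$ with $|\omega|=1$) is a normal left coideal subalgebra of $H$.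
   Context: A left coideal subalgebra of $H$ is called normal if it is stable under the left adjoint action of $H$ on itself, $h\cdot a=\sum h_1aS(h_2)$, where $S$ is the antipode. *)

theory Defs
  imports Complex_Main
begin

text \<open>A finite-dimensional Hopf algebra over the complex numbers is given in coordinates
  with respect to a basis e_0, ..., e_(n-1), where n = hdim H.  Elements of H are coordinate
  vectors (nat => complex) vanishing at indices >= n; elements of a tensor product of two
  spaces are coordinate matrices (nat => nat => complex).
  Conventions:
    e_i e_j = sum_k hmu i j k e_k;  1 = sum_k hunit k e_k;
    Delta(e_k) = sum_{i,j} hdelta k i j (e_i tensor e_j);  eps(e_k) = heps k;
    S(e_k) = sum_i hS k i e_i.\<close>

record hopf =
  hdim   :: nat
  hmu    :: "nat \<Rightarrow> nat \<Rightarrow> nat \<Rightarrow> complex"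
  hunit  :: "nat \<Rightarrow> complex"
  hdelta :: "nat \<Rightarrow> nat \<Rightarrow> nat \<Rightarrow> complex"
  heps   :: "nat \<Rightarrow> complex"
  hS     :: "nat \<Rightarrow> nat \<Rightarrow> complex"

text \<open>A finite-dimensional left module with basis w_0, ..., w_(d-1), d = mdim V:
  e_k . w_j = sum_i mrho k i j w_i.\<close>

record hmod =
  mdim :: nat
  mrho :: "nat \<Rightarrow> nat \<Rightarrow> nat \<Rightarrow> complex"

definition vsp :: "nat \<Rightarrow> (nat \<Rightarrow> complex) set" where
  "vsp m = {x. \<forall>k\<ge>m. x k = 0}"

definition bas :: "nat \<Rightarrow> nat \<Rightarrow> complex" where
  "bas i = (\<lambda>k. if k = i then 1 else 0)"

definition mult :: "hopf \<Rightarrow> (nat \<Rightarrow> complex) \<Rightarrow> (nat \<Rightarrow> complex) \<Rightarrow> nat \<Rightarrow> complex" where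
  "mult H x y = (\<lambda>k. if k < hdim H then
      (\<Sum>i<hdim H. \<Sum>j<hdim H. x i * y j * hmu H i j k) else 0)"

definition one :: "hopf \<Rightarrow> nat \<Rightarrow> complex" where
  "one H = (\<lambda>k. if k < hdim H then hunit H k else 0)"

definition comult :: "hopf \<Rightarrow> (nat \<Rightarrow> complex) \<Rightarrow> nat \<Rightarrow> nat \<Rightarrow> complex" where
  "comult H x = (\<lambda>i j. if i < hdim H \<and> j < hdim H then
      (\<Sum>k<hdim H. x k * hdelta H k i j) else 0)"

definition counit :: "hopf \<Rightarrow> (nat \<Rightarrow> complex) \<Rightarrow> complex" where
  "counit H x = (\<Sum>k<hdim H. x k * heps H k)"

definition antipode :: "hopf \<Rightarrow> (nat \<Rightarrow> complex) \<Rightarrow> nat \<Rightarrow> complex" where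
  "antipode H x = (\<lambda>i. if i < hdim H then (\<Sum>k<hdim H. x k * hS H k i) else 0)"

definition tprod :: "(nat \<Rightarrow> complex) \<Rightarrow> (nat \<Rightarrow> complex) \<Rightarrow> nat \<Rightarrow> nat \<Rightarrow> complex" where
  "tprod x y = (\<lambda>i j. x i * y j)"

definition tmult :: "hopf \<Rightarrow> (nat \<Rightarrow> nat \<Rightarrow> complex) \<Rightarrow> (nat \<Rightarrow> nat \<Rightarrow> complex)
                     \<Rightarrow> nat \<Rightarrow> nat \<Rightarrow> complex" where
  "tmult H t u = (\<lambda>k l. if k < hdim H \<and> l < hdim H then
      (\<Sum>i<hdim H. \<Sum>i'<hdim H. \<Sum>j<hdim H. \<Sum>j'<hdim H.
          t i i' * u j j' * hmu H i j k * hmu H i' j' l) else 0)"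

definition mSid :: "hopf \<Rightarrow> (nat \<Rightarrow> nat \<Rightarrow> complex) \<Rightarrow> nat \<Rightarrow> complex" where
  "mSid H t = (\<lambda>k. \<Sum>i<hdim H. \<Sum>j<hdim H.
      t i j * mult H (antipode H (bas i)) (bas j) k)"

definition midS :: "hopf \<Rightarrow> (nat \<Rightarrow> nat \<Rightarrow> complex) \<Rightarrow> nat \<Rightarrow> complex" where
  "midS H t = (\<lambda>k. \<Sum>i<hdim H. \<Sum>j<hdim H.
      t i j * mult H (bas i) (antipode H (bas j)) k)"

definition hopf_algebra :: "hopf \<Rightarrow> bool" where
  "hopf_algebra H \<longleftrightarrow>
     (\<forall>x\<in>vsp (hdim H). \<forall>y\<in>vsp (hdim H). \<forall>z\<in>vsp (hdim H).
         mult H (mult H x y) z = mult H x (mult H y z)) \<and>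
     (\<forall>x\<in>vsp (hdim H). mult H (one H) x = x \<and> mult H x (one H) = x) \<and>
     (\<forall>k<hdim H. \<forall>i<hdim H. \<forall>j<hdim H. \<forall>l<hdim H.
         (\<Sum>m<hdim H. hdelta H k m l * hdelta H m i j)
       = (\<Sum>m<hdim H. hdelta H k i m * hdelta H m j l)) \<and>
     (\<forall>x\<in>vsp (hdim H).
         (\<lambda>i. \<Sum>j<hdim H. heps H j * comult H x j i) = x \<and>
         (\<lambda>i. \<Sum>j<hdim H. comult H x i j * heps H j) = x) \<and>
     (\<forall>x\<in>vsp (hdim H). \<forall>y\<in>vsp (hdim H).
         comult H (mult H x y) = tmult H (comult H x) (comult H y)) \<and>
     comult H (one H) = tprod (one H) (one H) \<and>
     (\<forall>x\<in>vsp (hdim H). \<forall>y\<in>vsp (hdim H).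
         counit H (mult H x y) = counit H x * counit H y) \<and>
     counit H (one H) = 1 \<and>
     (\<forall>x\<in>vsp (hdim H).
         mSid H (comult H x) = (\<lambda>k. counit H x * one H k) \<and>
         midS H (comult H x) = (\<lambda>k. counit H x * one H k))"

definition act :: "hopf \<Rightarrow> hmod \<Rightarrow> (nat \<Rightarrow> complex) \<Rightarrow> (nat \<Rightarrow> complex) \<Rightarrow> nat \<Rightarrow> complex" where
  "act H V x v = (\<lambda>i. if i < mdim V then
      (\<Sum>k<hdim H. \<Sum>j<mdim V. x k * v j * mrho V k i j) else 0)"

definition hmodule :: "hopf \<Rightarrow> hmod \<Rightarrow> bool" where
  "hmodule H V \<longleftrightarrow>
     (\<forall>x\<in>vsp (hdim H). \<forall>y\<in>vsp (hdim H). \<forall>v\<in>vsp (mdim V).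
         act H V (mult H x y) v = act H V x (act H V y v)) \<and>
     (\<forall>v\<in>vsp (mdim V). act H V (one H) v = v)"

text \<open>Tensor product of modules (diagonal action via Delta); basis v_a tensor w_b of V tensor W
  is indexed by a * mdim W + b.  The trivial module is C with action via eps.\<close>

definition tens_mod :: "hopf \<Rightarrow> hmod \<Rightarrow> hmod \<Rightarrow> hmod" where
  "tens_mod H V W = \<lparr> mdim = mdim V * mdim W,
     mrho = (\<lambda>k p q. \<Sum>i<hdim H. \<Sum>j<hdim H. hdelta H k i j
              * mrho V i (p div mdim W) (q div mdim W)
              * mrho W j (p mod mdim W) (q mod mdim W)) \<rparr>"

definition triv_mod :: "hopf \<Rightarrow> hmod" where
  "triv_mod H = \<lparr> mdim = 1, mrho = (\<lambda>k i j. heps H k) \<rparr>"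

primrec tpow :: "hopf \<Rightarrow> hmod \<Rightarrow> nat \<Rightarrow> hmod" where
  "tpow H V 0 = triv_mod H"
| "tpow H V (Suc l) = tens_mod H (tpow H V l) V"

definition coact :: "hopf \<Rightarrow> hmod \<Rightarrow> (nat \<Rightarrow> complex) \<Rightarrow> (nat \<Rightarrow> complex) \<Rightarrow> nat \<Rightarrow> nat \<Rightarrow> complex" where
  "coact H V h v = (\<lambda>i l. \<Sum>j<hdim H. comult H h i j * act H V (bas j) v l)"

definition LKer :: "hopf \<Rightarrow> hmod \<Rightarrow> complex \<Rightarrow> (nat \<Rightarrow> complex) set" where
  "LKer H V \<omega> = {h \<in> vsp (hdim H). \<forall>v\<in>vsp (mdim V).
      coact H V h v = (\<lambda>i l. \<omega> * tprod h v i l)}"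

definition lsub :: "nat \<Rightarrow> (nat \<Rightarrow> complex) set \<Rightarrow> bool" where
  "lsub m L \<longleftrightarrow> L \<subseteq> vsp m \<and> (\<lambda>_. 0) \<in> L \<and>
     (\<forall>x\<in>L. \<forall>y\<in>L. (\<lambda>k. x k + y k) \<in> L) \<and> (\<forall>c. \<forall>x\<in>L. (\<lambda>k. c * x k) \<in> L)"

text \<open>Left coideal: subspace L with Delta(L) contained in H tensor L.\<close>

definition left_coideal :: "hopf \<Rightarrow> (nat \<Rightarrow> complex) set \<Rightarrow> bool" where
  "left_coideal H L \<longleftrightarrow> lsub (hdim H) L \<and>
     (\<forall>h\<in>L. \<forall>i<hdim H. (\<lambda>j. comult H h i j) \<in> L)"

definition adj :: "hopf \<Rightarrow> (nat \<Rightarrow> complex) \<Rightarrow> (nat \<Rightarrow> complex) \<Rightarrow> nat \<Rightarrow> complex" where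
  "adj H h a = (\<lambda>k. \<Sum>i<hdim H. \<Sum>j<hdim H.
      comult H h i j * mult H (mult H (bas i) a) (antipode H (bas j)) k)"

definition ad_stable :: "hopf \<Rightarrow> (nat \<Rightarrow> complex) set \<Rightarrow> bool" where
  "ad_stable H L \<longleftrightarrow> (\<forall>h\<in>vsp (hdim H). \<forall>a\<in>L. adj H h a \<in> L)"

definition subalgebra :: "hopf \<Rightarrow> (nat \<Rightarrow> complex) set \<Rightarrow> bool" where
  "subalgebra H L \<longleftrightarrow> lsub (hdim H) L \<and> one H \<in> L \<and> (\<forall>a\<in>L. \<forall>b\<in>L. mult H a b \<in> L)"

definition normal_left_coideal_subalgebra :: "hopf \<Rightarrow> (nat \<Rightarrow> complex) set \<Rightarrow> bool" where
  "normal_left_coideal_subalgebra H L \<longleftrightarrow>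
     left_coideal H L \<and> subalgebra H L \<and> ad_stable H L"

definition LKsum :: "hopf \<Rightarrow> hmod \<Rightarrow> (nat \<Rightarrow> complex) set" where
  "LKsum H V = {x. \<exists>F a. finite F \<and> F \<subseteq> {\<omega>. cmod \<omega> = 1} \<and>
      (\<forall>\<omega>\<in>F. a \<omega> \<in> LKer H V \<omega>) \<and> x = (\<lambda>k. \<Sum>\<omega>\<in>F. a \<omega> k)}"

end

theory Submission
  imports Defs
begin

lemma if0_mult[simp]: "(if P then x else 0) * (y::complex) = (if P then x * y else 0)" by simp
lemma mult_if0[simp]: "(y::complex) * (if P then x else 0) = (if P then y * x else 0)" by simp

lemma mult_bas_bas:
  assumes "i < hdim H" "j < hdim H"
  shows "mult H (bas i) (bas j) = (\<lambda>k. if k < hdim H then hmu H i j k else 0)"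
  using assms by (auto simp add: mult_def bas_def)

lemma comult_bas:
  assumes "k < hdim H"
  shows "comult H (bas k) = (\<lambda>i j. if i < hdim H \<and> j < hdim H then hdelta H k i j else 0)"
  using assms by (intro ext) (auto simp add: comult_def bas_def)

lemma sum_if_indep[simp]: "(\<Sum>k\<in>A. if P then f k else 0) = (if P then sum f A else 0)" by simp

lemma counit_bas: "k < hdim H \<Longrightarrow> counit H (bas k) = heps H k"
  by (simp add: counit_def bas_def)

lemma bas_vsp[simp]: "i < m \<Longrightarrow> bas i \<in> vsp m"
  by (simp add: bas_def vsp_def)

lemma antipode_bas:
  assumes "k < hdim H"
  shows "antipode H (bas k) = (\<lambda>i. if i < hdim H then hS H k i else 0)"
  using assms by (intro ext) (auto simp add: antipode_def bas_def)

lemma mult_bas_r: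
  assumes "j < hdim H"
  shows "mult H x (bas j) k = (if k < hdim H then (\<Sum>i<hdim H. x i * hmu H i j k) else 0)"
  using assms by (auto simp add: mult_def bas_def)

lemma mult_bas_l:
  assumes "i < hdim H"
  shows "mult H (bas i) y k = (if k < hdim H then (\<Sum>j<hdim H. y j * hmu H i j k) else 0)"
  using assms by (auto simp add: mult_def bas_def mult_ac)

lemma act_bas_gen:
  assumes "a < hdim H"
  shows "act H W (bas a) w i = (if i < mdim W then (\<Sum>j<mdim W. w j * mrho W a i j) else 0)"
  using assms by (simp add: act_def bas_def)

definition KK :: "hopf \<Rightarrow> hmod \<Rightarrow> (nat \<Rightarrow> complex) \<Rightarrow> nat \<Rightarrow> nat \<Rightarrow> nat \<Rightarrow> complex" where
  "KK H W h p l r = (\<Sum>j<hdim H. comult H h p j * mrho W j l r)"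

lemma coact_eq:
  "coact H W h v p l = (if l < mdim W then (\<Sum>r<mdim W. v r * KK H W h p l r) else 0)"
  by (simp add: coact_def KK_def act_bas_gen sum_distrib_left sum_distrib_right mult_ac
        cong: sum.cong_simp) (subst sum.swap, simp add: mult_ac)

lemma comult_out: "\<not> p < hdim H \<Longrightarrow> comult H h p j = 0"
  by (simp add: comult_def)

lemma comult_out2: "\<not> j < hdim H \<Longrightarrow> comult H h p j = 0"
  by (simp add: comult_def)

lemma LKer_iff:
  "h \<in> LKer H W \<omega> \<longleftrightarrow> h \<in> vsp (hdim H) \<and>
     (\<forall>p<hdim H. \<forall>l<mdim W. \<forall>r<mdim W. KK H W h p l r = \<omega> * h p * (if l = r then 1 else 0))"
proof
  assume h: "h \<in> LKer H W \<omega>"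
  show "h \<in> vsp (hdim H) \<and>
     (\<forall>p<hdim H. \<forall>l<mdim W. \<forall>r<mdim W. KK H W h p l r = \<omega> * h p * (if l = r then 1 else 0))"
  proof (intro conjI allI impI)
    show "h \<in> vsp (hdim H)" using h by (simp add: LKer_def)
    fix p l r assume "p < hdim H" "l < mdim W" "r < mdim W"
    have "coact H W h (bas r) = (\<lambda>i l. \<omega> * tprod h (bas r) i l)"
      using h \<open>r < mdim W\<close> by (simp add: LKer_def)
    hence "coact H W h (bas r) p l = \<omega> * tprod h (bas r) p l" by metis
    thus "KK H W h p l r = \<omega> * h p * (if l = r then 1 else 0)"
      using \<open>l < mdim W\<close> \<open>r < mdim W\<close>
      by (simp add: coact_eq tprod_def) (auto simp add: bas_def)
  qed
next
  assume A: "h \<in> vsp (hdim H) \<and>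
     (\<forall>p<hdim H. \<forall>l<mdim W. \<forall>r<mdim W. KK H W h p l r = \<omega> * h p * (if l = r then 1 else 0))"
  show "h \<in> LKer H W \<omega>"
    unfolding LKer_def
  proof (intro CollectI conjI ballI ext)
    show "h \<in> vsp (hdim H)" using A by simp
    fix v p l assume v: "v \<in> vsp (mdim W)"
    show "coact H W h v p l = \<omega> * tprod h v p l"
    proof (cases "p < hdim H \<and> l < mdim W")
      case True
      hence "coact H W h v p l = (\<Sum>r<mdim W. v r * (\<omega> * h p * (if l = r then 1 else 0)))"
        using A by (simp add: coact_eq)
      also have "\<dots> = \<omega> * h p * v l" using True by (simp add: mult_ac)
      finally show ?thesis by (simp add: tprod_def)
    next
      case False
      show ?thesis
      proof (cases "p < hdim H")
        case False thus ?thesis using A by (simp add: coact_eq KK_def comult_out tprod_def vsp_def)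
      next
        case True
        hence "\<not> l < mdim W" using \<open>\<not> (p < hdim H \<and> l < mdim W)\<close> by simp
        thus ?thesis using v by (simp add: coact_eq tprod_def vsp_def)
      qed
    qed
  qed
qed

lemma mv2: "(\<Sum>q\<in>Q. \<Sum>a\<in>A. \<Sum>b\<in>B. f q a b) = (\<Sum>a\<in>A. \<Sum>b\<in>B. \<Sum>q\<in>Q. (f q a b::complex))"
  by (subst sum.swap) (rule sum.cong[OF refl], rule sum.swap)
lemma mv3: "(\<Sum>q\<in>Q. \<Sum>a\<in>A. \<Sum>b\<in>B. \<Sum>c\<in>C. f q a b c) = (\<Sum>a\<in>A. \<Sum>b\<in>B. \<Sum>c\<in>C. \<Sum>q\<in>Q. (f q a b c::complex))"
  by (subst sum.swap) (rule sum.cong[OF refl], rule mv2)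
lemma mv4: "(\<Sum>q\<in>Q. \<Sum>a\<in>A. \<Sum>b\<in>B. \<Sum>c\<in>C. \<Sum>e\<in>E. f q a b c e) = (\<Sum>a\<in>A. \<Sum>b\<in>B. \<Sum>c\<in>C. \<Sum>e\<in>E. \<Sum>q\<in>Q. (f q a b c e::complex))"
  by (subst sum.swap) (rule sum.cong[OF refl], rule mv3)
lemma mv5: "(\<Sum>q\<in>Q. \<Sum>a\<in>A. \<Sum>b\<in>B. \<Sum>c\<in>C. \<Sum>e\<in>E. \<Sum>g\<in>G. f q a b c e g) = (\<Sum>a\<in>A. \<Sum>b\<in>B. \<Sum>c\<in>C. \<Sum>e\<in>E. \<Sum>g\<in>G. \<Sum>q\<in>Q. (f q a b c e g::complex))"
  by (subst sum.swap) (rule sum.cong[OF refl], rule mv4)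

lemma mv6: "(\<Sum>q\<in>Q. \<Sum>a\<in>A. \<Sum>b\<in>B. \<Sum>c\<in>C. \<Sum>e\<in>E. \<Sum>g\<in>G. \<Sum>g'\<in>G'. f q a b c e g g') = (\<Sum>a\<in>A. \<Sum>b\<in>B. \<Sum>c\<in>C. \<Sum>e\<in>E. \<Sum>g\<in>G. \<Sum>g'\<in>G'. \<Sum>q\<in>Q. (f q a b c e g g'::complex))"
  by (subst sum.swap) (rule sum.cong[OF refl], rule mv5)

lemma mv3b: "(\<Sum>c\<in>C. \<Sum>c'\<in>C'. \<Sum>i\<in>A. \<Sum>j\<in>B. \<Sum>m\<in>M. f c c' i j m) = (\<Sum>i\<in>A. \<Sum>j\<in>B. \<Sum>m\<in>M. \<Sum>c\<in>C. \<Sum>c'\<in>C'. (f c c' i j m::complex))"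
proof -
  have "(\<Sum>c\<in>C. \<Sum>c'\<in>C'. \<Sum>i\<in>A. \<Sum>j\<in>B. \<Sum>m\<in>M. f c c' i j m) = (\<Sum>c\<in>C. \<Sum>i\<in>A. \<Sum>j\<in>B. \<Sum>m\<in>M. \<Sum>c'\<in>C'. f c c' i j m)"
    by (rule sum.cong[OF refl], rule mv3)
  also have "\<dots> = (\<Sum>i\<in>A. \<Sum>j\<in>B. \<Sum>m\<in>M. \<Sum>c\<in>C. \<Sum>c'\<in>C'. f c c' i j m)" by (rule mv3)
  finally show ?thesis .
qed

lemma permA: "(\<Sum>q\<in>Q. \<Sum>m\<in>M. \<Sum>j\<in>J. \<Sum>c\<in>C. \<Sum>c'\<in>C'. f q m j c c') = (\<Sum>j\<in>J. \<Sum>c\<in>C. \<Sum>c'\<in>C'. \<Sum>q\<in>Q. \<Sum>m\<in>M. (f q m j c c'::complex))"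
proof -
  have "(\<Sum>q\<in>Q. \<Sum>m\<in>M. \<Sum>j\<in>J. \<Sum>c\<in>C. \<Sum>c'\<in>C'. f q m j c c') = (\<Sum>q\<in>Q. \<Sum>j\<in>J. \<Sum>c\<in>C. \<Sum>c'\<in>C'. \<Sum>m\<in>M. f q m j c c')"
    by (rule sum.cong[OF refl], rule mv3)
  also have "\<dots> = (\<Sum>j\<in>J. \<Sum>c\<in>C. \<Sum>c'\<in>C'. \<Sum>q\<in>Q. \<Sum>m\<in>M. f q m j c c')" by (rule mv3)
  finally show ?thesis .
qed

lemma permB: "(\<Sum>a\<in>A. \<Sum>b\<in>B. \<Sum>x\<in>X. \<Sum>j\<in>J. \<Sum>c\<in>C. \<Sum>c'\<in>C'. f a b x j c c') = (\<Sum>x\<in>X. \<Sum>j\<in>J. \<Sum>c\<in>C. \<Sum>c'\<in>C'. \<Sum>a\<in>A. \<Sum>b\<in>B. (f a b x j c c'::complex))"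
proof -
  have "(\<Sum>a\<in>A. \<Sum>b\<in>B. \<Sum>x\<in>X. \<Sum>j\<in>J. \<Sum>c\<in>C. \<Sum>c'\<in>C'. f a b x j c c') = (\<Sum>a\<in>A. \<Sum>x\<in>X. \<Sum>j\<in>J. \<Sum>c\<in>C. \<Sum>c'\<in>C'. \<Sum>b\<in>B. f a b x j c c')"
    by (rule sum.cong[OF refl], rule mv4)
  also have "\<dots> = (\<Sum>x\<in>X. \<Sum>j\<in>J. \<Sum>c\<in>C. \<Sum>c'\<in>C'. \<Sum>a\<in>A. \<Sum>b\<in>B. f a b x j c c')" by (rule mv4)
  finally show ?thesis .
qed

lemma permC: "(\<Sum>a\<in>A. \<Sum>b\<in>B. \<Sum>c\<in>C. \<Sum>e\<in>E. f a b c e) = (\<Sum>c\<in>C. \<Sum>e\<in>E. \<Sum>a\<in>A. \<Sum>b\<in>B. (f a b c e::complex))"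
proof -
  have "(\<Sum>a\<in>A. \<Sum>b\<in>B. \<Sum>c\<in>C. \<Sum>e\<in>E. f a b c e) = (\<Sum>a\<in>A. \<Sum>c\<in>C. \<Sum>e\<in>E. \<Sum>b\<in>B. f a b c e)"
    by (rule sum.cong[OF refl], rule mv2)
  also have "\<dots> = (\<Sum>c\<in>C. \<Sum>e\<in>E. \<Sum>a\<in>A. \<Sum>b\<in>B. f a b c e)" by (rule mv2)
  finally show ?thesis .
qed

definition Rr :: "hopf \<Rightarrow> hmod \<Rightarrow> nat \<Rightarrow> nat \<Rightarrow> nat \<Rightarrow> nat \<Rightarrow> complex" where
  "Rr H W b = (\<lambda>y m r. \<Sum>c<hdim H. \<Sum>c'<hdim H. hdelta H b c c' * hS H c' y * (\<Sum>t<hdim H. hS H c t * mrho W t m r))"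

definition kmul :: "hopf \<Rightarrow> hmod \<Rightarrow> (nat \<Rightarrow> nat \<Rightarrow> nat \<Rightarrow> complex) \<Rightarrow> (nat \<Rightarrow> nat \<Rightarrow> nat \<Rightarrow> complex) \<Rightarrow> nat \<Rightarrow> nat \<Rightarrow> nat \<Rightarrow> complex" where
  "kmul H W X Y p l r = (\<Sum>i<hdim H. \<Sum>j<hdim H. hmu H i j p * (\<Sum>m<mdim W. X i l m * Y j m r))"

definition tens1 :: "(nat \<Rightarrow> complex) \<Rightarrow> nat \<Rightarrow> nat \<Rightarrow> nat \<Rightarrow> complex" where
  "tens1 y = (\<lambda>x l m. y x * (if l = m then 1 else 0))"

definition cv :: "hopf \<Rightarrow> hmod \<Rightarrow> (nat \<Rightarrow> nat \<Rightarrow> nat \<Rightarrow> nat \<Rightarrow> complex) \<Rightarrow> (nat \<Rightarrow> nat \<Rightarrow> nat \<Rightarrow> nat \<Rightarrow> complex) \<Rightarrow> nat \<Rightarrow> nat \<Rightarrow> nat \<Rightarrow> nat \<Rightarrow> complex" where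
  "cv H W F G k = (\<lambda>p l r. \<Sum>a<hdim H. \<Sum>b<hdim H. hdelta H k a b * kmul H W (F a) (G b) p l r)"

definition Eu :: "hopf \<Rightarrow> nat \<Rightarrow> nat \<Rightarrow> nat \<Rightarrow> nat \<Rightarrow> complex" where
  "Eu H k = (\<lambda>p l r. heps H k * tens1 (one H) p l r)"

definition feq :: "hopf \<Rightarrow> hmod \<Rightarrow> (nat \<Rightarrow> nat \<Rightarrow> nat \<Rightarrow> nat \<Rightarrow> complex) \<Rightarrow> (nat \<Rightarrow> nat \<Rightarrow> nat \<Rightarrow> nat \<Rightarrow> complex) \<Rightarrow> bool" where
  "feq H W F G \<longleftrightarrow> (\<forall>k<hdim H. \<forall>p<hdim H. \<forall>l<mdim W. \<forall>r<mdim W. F k p l r = G k p l r)"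

lemma kmul_scale_r: "kmul H W X (\<lambda>i l m. z * T i l m) p l r = z * kmul H W X T p l r"
  by (simp add: kmul_def sum_distrib_left mult_ac)

lemma kmul_scale_l: "kmul H W (\<lambda>i l m. z * T i l m) X p l r = z * kmul H W T X p l r"
  by (simp add: kmul_def sum_distrib_left mult_ac)

lemma kmul_cong:
  assumes "l < mdim W" "r < mdim W"
    "\<And>i m. i < hdim H \<Longrightarrow> m < mdim W \<Longrightarrow> X i l m = X' i l m"
    "\<And>j m. j < hdim H \<Longrightarrow> m < mdim W \<Longrightarrow> Y j m r = Y' j m r"
  shows "kmul H W X Y p l r = kmul H W X' Y' p l r"
  unfolding kmul_def using assms by (simp cong: sum.cong_simp)

lemma cv_cong: "feq H W F F' \<Longrightarrow> feq H W G G' \<Longrightarrow> feq H W (cv H W F G) (cv H W F' G')"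
  unfolding feq_def cv_def
  by (auto intro!: sum.cong arg_cong2[where f="(*)"] kmul_cong)

lemma feq_trans: "feq H W F G \<Longrightarrow> feq H W G K \<Longrightarrow> feq H W F K"
  unfolding feq_def by metis

lemmas [trans] = feq_trans

lemma feq_sym: "feq H W F G \<Longrightarrow> feq H W G F"
  unfolding feq_def by metis

locale hctx =
  fixes H :: hopf and V :: hmod
  assumes hopf: "hopf_algebra H" and hm: "hmodule H V"
begin

abbreviation "n \<equiv> hdim H"
abbreviation "d \<equiv> mdim V"

lemma coassoc:
  assumes "k < n" "i < n" "j < n" "l < n"
  shows "(\<Sum>m<n. hdelta H k m l * hdelta H m i j) = (\<Sum>m<n. hdelta H k i m * hdelta H m j l)"
  using hopf assms unfolding hopf_algebra_def by blast

lemma counitL: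
  assumes "k < n" "i < n"
  shows "(\<Sum>j<n. heps H j * hdelta H k j i) = (if k = i then 1 else 0)"
proof -
  have "(\<lambda>i. \<Sum>j<n. heps H j * comult H (bas k) j i) = bas k"
    using hopf assms unfolding hopf_algebra_def by auto
  hence "(\<Sum>j<n. heps H j * comult H (bas k) j i) = bas k i" by metis
  thus ?thesis using assms by (simp add: comult_bas cong: sum.cong_simp) (simp add: bas_def)
qed

lemma counitR:
  assumes "k < n" "i < n"
  shows "(\<Sum>j<n. hdelta H k i j * heps H j) = (if k = i then 1 else 0)"
proof -
  have "(\<lambda>i. \<Sum>j<n. comult H (bas k) i j * heps H j) = bas k"
    using hopf assms unfolding hopf_algebra_def by auto
  hence "(\<Sum>j<n. comult H (bas k) i j * heps H j) = bas k i" by metis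
  thus ?thesis using assms by (simp add: comult_bas cong: sum.cong_simp) (simp add: bas_def)
qed

lemma antipodeL:
  assumes "k < n" "l < n"
  shows "(\<Sum>i<n. \<Sum>j<n. hdelta H k i j * (\<Sum>m<n. hS H i m * hmu H m j l)) = heps H k * hunit H l"
proof -
  have "mSid H (comult H (bas k)) = (\<lambda>k'. counit H (bas k) * one H k')"
    using hopf assms unfolding hopf_algebra_def by auto
  hence "mSid H (comult H (bas k)) l = counit H (bas k) * one H l" by metis
  thus ?thesis using assms
    by (simp add: mSid_def comult_bas antipode_bas mult_bas_r counit_bas one_def cong: sum.cong_simp)
qed

lemma antipodeR:
  assumes "k < n" "l < n"
  shows "(\<Sum>i<n. \<Sum>j<n. hdelta H k i j * (\<Sum>m<n. hS H j m * hmu H i m l)) = heps H k * hunit H l"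
proof -
  have "midS H (comult H (bas k)) = (\<lambda>k'. counit H (bas k) * one H k')"
    using hopf assms unfolding hopf_algebra_def by auto
  hence "midS H (comult H (bas k)) l = counit H (bas k) * one H l" by metis
  thus ?thesis using assms
    by (simp add: midS_def comult_bas antipode_bas mult_bas_l counit_bas one_def mult_ac cong: sum.cong_simp)
qed


lemma massoc:
  assumes "i < n" "j < n" "k < n" "l < n"
  shows "(\<Sum>m<n. hmu H i j m * hmu H m k l) = (\<Sum>m<n. hmu H j k m * hmu H i m l)"
proof -
  have "mult H (mult H (bas i) (bas j)) (bas k) = mult H (bas i) (mult H (bas j) (bas k))"
    using hopf assms unfolding hopf_algebra_def by auto
  hence "mult H (mult H (bas i) (bas j)) (bas k) l = mult H (bas i) (mult H (bas j) (bas k)) l" by metis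
  thus ?thesis using assms
    by (simp add: mult_bas_r mult_bas_l mult_bas_bas mult_ac cong: sum.cong_simp)
qed

lemma unitL:
  assumes "j < n" "l < n"
  shows "(\<Sum>m<n. hunit H m * hmu H m j l) = (if j = l then 1 else 0)"
proof -
  have "mult H (one H) (bas j) = bas j"
    using hopf assms unfolding hopf_algebra_def by auto
  hence "mult H (one H) (bas j) l = bas j l" by metis
  thus ?thesis using assms
    by (simp add: mult_bas_r one_def cong: sum.cong_simp) (auto simp: bas_def)
qed

lemma unitR:
  assumes "j < n" "l < n"
  shows "(\<Sum>m<n. hunit H m * hmu H j m l) = (if j = l then 1 else 0)"
proof -
  have "mult H (bas j) (one H) = bas j"
    using hopf assms unfolding hopf_algebra_def by auto
  hence "mult H (bas j) (one H) l = bas j l" by metis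
  thus ?thesis using assms
    by (simp add: mult_bas_l one_def cong: sum.cong_simp) (auto simp: bas_def)
qed

lemma comult_mult:
  assumes "x \<in> vsp n" "y \<in> vsp n"
  shows "comult H (mult H x y) = tmult H (comult H x) (comult H y)"
  using hopf assms unfolding hopf_algebra_def by auto

lemma comult_one: "comult H (one H) = tprod (one H) (one H)"
  using hopf unfolding hopf_algebra_def by auto

lemma act_bas:
  assumes "a < n"
  shows "act H V (bas a) w i = (if i < d then (\<Sum>j<d. w j * mrho V a i j) else 0)"
  using assms by (simp add: act_def bas_def)

lemma mod_mult:
  assumes "a < n" "b < n" "i < d" "j < d"
  shows "(\<Sum>k<n. hmu H a b k * mrho V k i j) = (\<Sum>m<d. mrho V a i m * mrho V b m j)"
proof -
  have "act H V (mult H (bas a) (bas b)) (bas j) = act H V (bas a) (act H V (bas b) (bas j))"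
    using hm assms unfolding hmodule_def by auto
  hence "act H V (mult H (bas a) (bas b)) (bas j) i = act H V (bas a) (act H V (bas b) (bas j)) i" by metis
  thus ?thesis using assms
    by (simp add: act_bas mult_bas_bas cong: sum.cong_simp) (simp add: act_def bas_def mult_ac)
qed

lemma mod_unit:
  assumes "i < d" "j < d"
  shows "(\<Sum>k<n. hunit H k * mrho V k i j) = (if i = j then 1 else 0)"
proof -
  have "act H V (one H) (bas j) = bas j"
    using hm assms unfolding hmodule_def by auto
  hence "act H V (one H) (bas j) i = bas j i" by metis
  thus ?thesis using assms
    by (simp add: act_def one_def bas_def cong: sum.cong_simp)
qed


lemma comult_in: "i < n \<Longrightarrow> j < n \<Longrightarrow> comult H x i j = (\<Sum>m<n. x m * hdelta H m i j)"
  by (simp add: comult_def)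

lemma CA:
  assumes "i < n" "p < n" "j < n"
  shows "(\<Sum>k<n. comult H x i k * hdelta H k p j) = (\<Sum>k<n. hdelta H k i p * comult H x k j)"
proof -
  have "(\<Sum>k<n. comult H x i k * hdelta H k p j) = (\<Sum>k<n. \<Sum>m<n. x m * hdelta H m i k * hdelta H k p j)"
    using assms by (simp add: comult_in sum_distrib_right cong: sum.cong_simp)
  also have "\<dots> = (\<Sum>m<n. x m * (\<Sum>k<n. hdelta H m i k * hdelta H k p j))"
    by (subst sum.swap) (simp add: sum_distrib_left mult_ac)
  also have "\<dots> = (\<Sum>m<n. x m * (\<Sum>k<n. hdelta H m k j * hdelta H k i p))"
    using assms by (simp add: coassoc)
  also have "\<dots> = (\<Sum>k<n. hdelta H k i p * comult H x k j)"
    using assms by (simp add: comult_in sum_distrib_left sum_distrib_right mult_ac cong: sum.cong_simp)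
      (subst sum.swap, simp add: mult_ac)
  finally show ?thesis .
qed


lemma coideal_LKer:
  assumes h: "h \<in> LKer H W \<omega>" and i: "i < n"
  shows "(\<lambda>j. comult H h i j) \<in> LKer H W \<omega>"
proof -
  let ?g = "\<lambda>j. comult H h i j"
  have hv: "h \<in> vsp n" and hK: "\<And>p l r. p < n \<Longrightarrow> l < mdim W \<Longrightarrow> r < mdim W \<Longrightarrow>
      KK H W h p l r = \<omega> * h p * (if l = r then 1 else 0)"
    using h by (auto simp: LKer_iff)
  have cg: "comult H ?g p j = (\<Sum>k<n. hdelta H k i p * comult H h k j)" if "p < n" "j < n" for p j
    using that i by (simp add: comult_in[of p j] CA[symmetric] cong: sum.cong_simp)
  show ?thesis unfolding LKer_iff
  proof (intro conjI allI impI)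
    show "?g \<in> vsp n" by (simp add: vsp_def comult_def)
    fix p l r assume p: "p < n" and l: "l < mdim W" and r: "r < mdim W"
    have "KK H W ?g p l r = (\<Sum>j<n. \<Sum>k<n. hdelta H k i p * comult H h k j * mrho W j l r)"
      unfolding KK_def using p by (simp add: cg sum_distrib_right cong: sum.cong_simp)
    also have "\<dots> = (\<Sum>k<n. hdelta H k i p * KK H W h k l r)"
      unfolding KK_def by (subst sum.swap) (simp add: sum_distrib_left mult_ac)
    also have "\<dots> = (\<Sum>k<n. hdelta H k i p * (\<omega> * h k * (if l = r then 1 else 0)))"
      using l r by (simp add: hK cong: sum.cong_simp)
    also have "\<dots> = \<omega> * ?g p * (if l = r then 1 else 0)"
      using i p by (simp add: comult_in sum_distrib_left mult_ac)
    finally show "KK H W ?g p l r = \<omega> * ?g p * (if l = r then 1 else 0)" .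
  qed
qed


lemma tmult_in: "k < n \<Longrightarrow> l < n \<Longrightarrow> tmult H t u k l =
  (\<Sum>i<n. \<Sum>i'<n. \<Sum>j<n. \<Sum>j'<n. t i i' * u j j' * hmu H i j k * hmu H i' j' l)"
  by (simp add: tmult_def)

lemma PK:
  assumes x: "x \<in> vsp n" and y: "y \<in> vsp n" and p: "p < n" and l: "l < d" and r: "r < d"
  shows "KK H V (mult H x y) p l r =
    (\<Sum>i<n. \<Sum>j<n. hmu H i j p * (\<Sum>m<d. KK H V x i l m * KK H V y j m r))"
proof -
  have "KK H V (mult H x y) p l r = (\<Sum>q<n. (\<Sum>i<n. \<Sum>i'<n. \<Sum>j<n. \<Sum>j'<n.
      comult H x i i' * comult H y j j' * hmu H i j p * hmu H i' j' q) * mrho V q l r)"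
    unfolding KK_def using x y p by (simp add: comult_mult tmult_in cong: sum.cong_simp)
  also have "\<dots> = (\<Sum>i<n. \<Sum>i'<n. \<Sum>j<n. \<Sum>j'<n.
      comult H x i i' * comult H y j j' * hmu H i j p * (\<Sum>q<n. hmu H i' j' q * mrho V q l r))"
    apply (simp only: sum_distrib_left sum_distrib_right)
    apply (subst mv4)
    apply (simp add: mult_ac)
    done
  also have "\<dots> = (\<Sum>i<n. \<Sum>i'<n. \<Sum>j<n. \<Sum>j'<n.
      comult H x i i' * comult H y j j' * hmu H i j p * (\<Sum>m<d. mrho V i' l m * mrho V j' m r))"
    using l r by (simp add: mod_mult cong: sum.cong_simp)
  also have "\<dots> = (\<Sum>i<n. \<Sum>j<n. hmu H i j p * (\<Sum>m<d. KK H V x i l m * KK H V y j m r))"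
    unfolding KK_def
    apply (simp only: sum_distrib_left sum_distrib_right)
    apply (rule sum.cong[OF refl])
    apply (rule trans[OF sum.swap])
    apply (rule sum.cong[OF refl])
    apply (rule trans[OF _ mv2[symmetric]])
    apply (rule trans[OF _ sum.swap])
    apply (simp add: mult_ac)
    done
  finally show ?thesis .
qed


lemma mult_vsp[simp]: "mult H x y \<in> vsp n"
  by (simp add: vsp_def mult_def)

lemma LKer_mult:
  assumes a: "a \<in> LKer H V \<omega>" and b: "b \<in> LKer H V \<omega>'"
  shows "mult H a b \<in> LKer H V (\<omega> * \<omega>')"
proof -
  have av: "a \<in> vsp n" and aK: "\<And>p l r. p < n \<Longrightarrow> l < d \<Longrightarrow> r < d \<Longrightarrow>
      KK H V a p l r = \<omega> * a p * (if l = r then 1 else 0)"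
    using a by (auto simp: LKer_iff)
  have bv: "b \<in> vsp n" and bK: "\<And>p l r. p < n \<Longrightarrow> l < d \<Longrightarrow> r < d \<Longrightarrow>
      KK H V b p l r = \<omega>' * b p * (if l = r then 1 else 0)"
    using b by (auto simp: LKer_iff)
  show ?thesis unfolding LKer_iff
  proof (intro conjI allI impI)
    show "mult H a b \<in> vsp n" by simp
    fix p l r assume p: "p < n" and l: "l < d" and r: "r < d"
    have "KK H V (mult H a b) p l r = (\<Sum>i<n. \<Sum>j<n. hmu H i j p *
        (\<Sum>m<d. (\<omega> * a i * (if l = m then 1 else 0)) * (\<omega>' * b j * (if m = r then 1 else 0))))"
      using av bv p l r by (simp add: PK aK bK cong: sum.cong_simp)
    also have "\<dots> = (\<Sum>i<n. \<Sum>j<n. hmu H i j p * (\<omega> * a i * \<omega>' * b j * (if l = r then 1 else 0)))"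
      using l by (auto intro!: sum.cong simp: mult_ac)
    also have "\<dots> = \<omega> * \<omega>' * mult H a b p * (if l = r then 1 else 0)"
      using p by (simp add: mult_def sum_distrib_left mult_ac)
    finally show "KK H V (mult H a b) p l r = \<omega> * \<omega>' * mult H a b p * (if l = r then 1 else 0)" .
  qed
qed


lemma LKer_tens:
  assumes hW: "h \<in> LKer H W \<alpha>" and hU: "h \<in> LKer H U \<beta>"
  shows "h \<in> LKer H (tens_mod H W U) (\<alpha> * \<beta>)"
proof -
  have hv: "h \<in> vsp n" and WK: "\<And>p l r. p < n \<Longrightarrow> l < mdim W \<Longrightarrow> r < mdim W \<Longrightarrow>
      KK H W h p l r = \<alpha> * h p * (if l = r then 1 else 0)"
    using hW by (auto simp: LKer_iff)
  have UK: "\<And>p l r. p < n \<Longrightarrow> l < mdim U \<Longrightarrow> r < mdim U \<Longrightarrow>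
      KK H U h p l r = \<beta> * h p * (if l = r then 1 else 0)"
    using hU by (auto simp: LKer_iff)
  let ?e = "mdim U"
  show ?thesis unfolding LKer_iff
  proof (intro conjI allI impI)
    show "h \<in> vsp n" by (rule hv)
    fix p q r assume p: "p < n" and q: "q < mdim (tens_mod H W U)" and r: "r < mdim (tens_mod H W U)"
    have q': "q < mdim W * ?e" and r': "r < mdim W * ?e" using q r by (auto simp: tens_mod_def)
    hence e: "0 < ?e" by (cases "?e = 0") auto
    have qa: "q div ?e < mdim W" and ra: "r div ?e < mdim W"
      using q' r' e by (auto simp: less_mult_imp_div_less)
    have qb: "q mod ?e < ?e" and rb: "r mod ?e < ?e" using e by auto
    have "KK H (tens_mod H W U) h p q r = (\<Sum>j<n. \<Sum>i<n. \<Sum>i'<n.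
        comult H h p j * hdelta H j i i' * mrho W i (q div ?e) (r div ?e) * mrho U i' (q mod ?e) (r mod ?e))"
      by (simp add: KK_def tens_mod_def sum_distrib_left mult_ac)
    also have "\<dots> = (\<Sum>i<n. \<Sum>i'<n. (\<Sum>j<n. comult H h p j * hdelta H j i i') *
        mrho W i (q div ?e) (r div ?e) * mrho U i' (q mod ?e) (r mod ?e))"
      by (subst mv2) (simp add: sum_distrib_right)
    also have "\<dots> = (\<Sum>i<n. \<Sum>i'<n. (\<Sum>j<n. hdelta H j p i * comult H h j i') *
        mrho W i (q div ?e) (r div ?e) * mrho U i' (q mod ?e) (r mod ?e))"
      using p by (simp add: CA cong: sum.cong_simp)
    also have "\<dots> = (\<Sum>i<n. mrho W i (q div ?e) (r div ?e) * (\<Sum>j<n. hdelta H j p i * KK H U h j (q mod ?e) (r mod ?e)))"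
      unfolding KK_def
      apply (simp only: sum_distrib_left sum_distrib_right)
      apply (rule sum.cong[OF refl])
      apply (subst sum.swap)
      apply (simp add: mult_ac)
      done
    also have "\<dots> = (\<Sum>i<n. mrho W i (q div ?e) (r div ?e) * (\<Sum>j<n. hdelta H j p i * (\<beta> * h j * (if q mod ?e = r mod ?e then 1 else 0))))"
      using qb rb by (simp add: UK cong: sum.cong_simp)
    also have "\<dots> = \<beta> * (if q mod ?e = r mod ?e then 1 else 0) * KK H W h p (q div ?e) (r div ?e)"
      unfolding KK_def using p by (simp add: comult_in sum_distrib_left mult_ac cong: sum.cong_simp)
    also have "\<dots> = \<alpha> * \<beta> * h p * (if q = r then 1 else 0)"
    proof -
      have "(q mod ?e = r mod ?e \<and> q div ?e = r div ?e) = (q = r)"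
        by (metis div_mult_mod_eq)
      thus ?thesis using p qa ra by (auto simp: WK)
    qed
    finally show "KK H (tens_mod H W U) h p q r = \<alpha> * \<beta> * h p * (if q = r then 1 else 0)" .
  qed
qed

lemma LKer_triv: "h \<in> vsp n \<Longrightarrow> h \<in> LKer H (triv_mod H) 1"
  unfolding LKer_iff
proof (intro conjI allI impI)
  fix p l r assume h: "h \<in> vsp n" and p: "p < n" and "l < mdim (triv_mod H)" "r < mdim (triv_mod H)"
  hence lr: "l = 0" "r = 0" by (auto simp: triv_mod_def)
  have "KK H (triv_mod H) h p l r = (\<Sum>j<n. (\<Sum>m<n. h m * hdelta H m p j) * heps H j)"
    using p by (simp add: KK_def triv_mod_def comult_in cong: sum.cong_simp)
  also have "\<dots> = (\<Sum>m<n. h m * (\<Sum>j<n. hdelta H m p j * heps H j))"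
    by (simp add: sum_distrib_right sum_distrib_left mult_ac) (rule sum.swap)
  also have "\<dots> = h p" using p by (simp add: counitR cong: sum.cong_simp)
  finally show "KK H (triv_mod H) h p l r = 1 * h p * (if l = r then 1 else 0)" using lr by simp
qed auto

lemma LKer_tpow: "h \<in> LKer H V \<omega> \<Longrightarrow> h \<in> LKer H (tpow H V l) (\<omega> ^ l)"
proof (induction l)
  case 0
  hence "h \<in> vsp n" by (simp add: LKer_def)
  thus ?case by (simp add: LKer_triv)
next
  case (Suc l) thus ?case using LKer_tens[of h "tpow H V l" "\<omega>^l" V \<omega>] by (simp add: mult_ac)
qed


lemma kmul_assoc:
  assumes p: "p < n"
  shows "kmul H V (kmul H V X Y) Z p l r = kmul H V X (kmul H V Y Z) p l r"
proof -
  have L: "kmul H V (kmul H V X Y) Z p l r = (\<Sum>a<n. \<Sum>b<n. \<Sum>j<n. \<Sum>m'<d. \<Sum>m<d.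
     (\<Sum>i<n. hmu H a b i * hmu H i j p) * (X a l m' * Y b m' m * Z j m r))"
    unfolding kmul_def
    apply (simp only: sum_distrib_left sum_distrib_right)
    apply (rule trans[OF mv5])
    apply (rule trans[OF mv3])
    apply (rule trans[OF mv4])
    apply (simp add: mult_ac)
    done
  have R: "kmul H V X (kmul H V Y Z) p l r = (\<Sum>a<n. \<Sum>b<n. \<Sum>j<n. \<Sum>m'<d. \<Sum>m<d.
     (\<Sum>c<n. hmu H b j c * hmu H a c p) * (X a l m' * Y b m' m * Z j m r))"
    unfolding kmul_def
    apply (simp only: sum_distrib_left sum_distrib_right)
    apply (rule sum.cong[OF refl])
    apply (rule trans[OF mv4])
    apply (rule trans[OF mv2])
    apply (simp add: mult_ac)
    done
  show ?thesis unfolding L R using p by (simp add: massoc cong: sum.cong_simp)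
qed


lemma kmul_lin_l:
  "kmul H V (\<lambda>i l m. \<Sum>c\<in>C. \<Sum>c'\<in>C'. z c c' * T c c' i l m) Y p l r =
   (\<Sum>c\<in>C. \<Sum>c'\<in>C'. z c c' * kmul H V (T c c') Y p l r)"
  unfolding kmul_def
  apply (simp only: sum_distrib_left sum_distrib_right)
  apply (rule trans[OF _ mv3b[symmetric]])
  apply (simp add: mult_ac)
  done

lemma kmul_lin_r:
  "kmul H V X (\<lambda>i l m. \<Sum>c\<in>C. \<Sum>c'\<in>C'. z c c' * T c c' i l m) p l r =
   (\<Sum>c\<in>C. \<Sum>c'\<in>C'. z c c' * kmul H V X (T c c') p l r)"
  unfolding kmul_def
  apply (simp only: sum_distrib_left sum_distrib_right)
  apply (rule trans[OF _ mv3b[symmetric]])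
  apply (simp add: mult_ac)
  done

lemma kmul_unitR:
  assumes "p < n" "r < d"
  shows "kmul H V X (tens1 (one H)) p l r = X p l r"
proof -
  have "kmul H V X (tens1 (one H)) p l r = (\<Sum>i<n. X i l r * (\<Sum>j<n. hunit H j * hmu H i j p))"
    using assms by (simp add: kmul_def tens1_def one_def sum_distrib_left mult_ac cong: sum.cong_simp)
  also have "\<dots> = X p l r" using assms by (simp add: unitR cong: sum.cong_simp)
  finally show ?thesis .
qed

lemma kmul_unitL:
  assumes "p < n" "l < d"
  shows "kmul H V (tens1 (one H)) X p l r = X p l r"
proof -
  have "kmul H V (tens1 (one H)) X p l r = (\<Sum>j<n. X j l r * (\<Sum>i<n. hunit H i * hmu H i j p))"
    using assms by (simp add: kmul_def tens1_def one_def sum_distrib_left mult_ac cong: sum.cong_simp)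
      (subst sum.swap, simp add: mult_ac)
  also have "\<dots> = X p l r" using assms by (simp add: unitL cong: sum.cong_simp)
  finally show ?thesis .
qed


lemma cv_unitR: "feq H V (cv H V F (Eu H)) F"
  unfolding feq_def
proof (intro allI impI)
  fix k p l r assume k: "k < n" and p: "p < n" and l: "l < d" and r: "r < d"
  have "cv H V F (Eu H) k p l r = (\<Sum>a<n. (\<Sum>b<n. hdelta H k a b * heps H b) * F a p l r)"
    unfolding cv_def Eu_def using p r
    by (simp add: kmul_scale_r kmul_unitR sum_distrib_right sum_distrib_left mult_ac)
  also have "\<dots> = F k p l r" using k by (simp add: counitR cong: sum.cong_simp)
  finally show "cv H V F (Eu H) k p l r = F k p l r" .
qed

lemma cv_unitL: "feq H V (cv H V (Eu H) F) F"
  unfolding feq_def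
proof (intro allI impI)
  fix k p l r assume k: "k < n" and p: "p < n" and l: "l < d" and r: "r < d"
  have "cv H V (Eu H) F k p l r = (\<Sum>b<n. (\<Sum>a<n. heps H a * hdelta H k a b) * F b p l r)"
    unfolding cv_def Eu_def using p l
    by (simp add: kmul_scale_l kmul_unitL sum_distrib_right sum_distrib_left mult_ac) (rule sum.swap)
  also have "\<dots> = F k p l r" using k by (simp add: counitL cong: sum.cong_simp)
  finally show "cv H V (Eu H) F k p l r = F k p l r" .
qed

lemma cv_assoc: "feq H V (cv H V (cv H V F G) K) (cv H V F (cv H V G K))"
  unfolding feq_def
proof (intro allI impI)
  fix k p l r assume k: "k < n" and p: "p < n" and l: "l < d" and r: "r < d"
  let ?W = "\<lambda>c c' b. kmul H V (F c) (kmul H V (G c') (K b)) p l r"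
  have "cv H V (cv H V F G) K k p l r = (\<Sum>a<n. \<Sum>b<n. \<Sum>c<n. \<Sum>c'<n.
      hdelta H k a b * (hdelta H a c c' * ?W c c' b))"
    unfolding cv_def using p by (simp add: kmul_lin_l kmul_assoc sum_distrib_left)
  also have "\<dots> = (\<Sum>c<n. \<Sum>c'<n. \<Sum>b<n. (\<Sum>a<n. hdelta H k a b * hdelta H a c c') * ?W c c' b)"
    apply (rule trans[OF mv3])
    apply (rule trans[OF mv2])
    apply (simp add: sum_distrib_right sum_distrib_left mult_ac)
    done
  also have "\<dots> = (\<Sum>c<n. \<Sum>c'<n. \<Sum>b<n. (\<Sum>a<n. hdelta H k c a * hdelta H a c' b) * ?W c c' b)"
    using k by (simp add: coassoc cong: sum.cong_simp)
  also have "\<dots> = cv H V F (cv H V G K) k p l r"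
    unfolding cv_def
    apply (simp add: kmul_lin_r sum_distrib_left sum_distrib_right)
    apply (rule sum.cong[OF refl])
    apply (rule trans[OF _ mv2[symmetric]])
    apply (simp add: mult_ac)
    done
  finally show "cv H V (cv H V F G) K k p l r = cv H V F (cv H V G K) k p l r" .
qed


lemma KK_bas: "a < n \<Longrightarrow> x < n \<Longrightarrow> KK H W (bas a) x l m = (\<Sum>j<n. hdelta H a x j * mrho W j l m)"
  by (simp add: KK_def comult_bas cong: sum.cong_simp)

lemma comult_lin2: "comult H (\<lambda>q. \<Sum>c\<in>C. \<Sum>c'\<in>C'. z c c' * f c c' q) i j =
   (\<Sum>c\<in>C. \<Sum>c'\<in>C'. z c c' * comult H (f c c') i j)"
  unfolding comult_def by (auto simp: sum_distrib_left sum_distrib_right mult_ac intro!: mv2)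

lemma KK_lin2: "KK H W (\<lambda>q. \<Sum>c\<in>C. \<Sum>c'\<in>C'. z c c' * f c c' q) p l r =
   (\<Sum>c\<in>C. \<Sum>c'\<in>C'. z c c' * KK H W (f c c') p l r)"
  unfolding KK_def comult_lin2
  by (simp add: sum_distrib_left sum_distrib_right mult_ac) (rule mv2)

lemma KK_scale: "KK H W (\<lambda>q. z * f q) p l r = z * KK H W f p l r"
  by (simp add: KK_def comult_def sum_distrib_left sum_distrib_right mult_ac)

lemma KK_one: "p < n \<Longrightarrow> l < d \<Longrightarrow> r < d \<Longrightarrow> KK H V (one H) p l r = tens1 (one H) p l r"
  unfolding KK_def comult_one
  by (simp add: tprod_def tens1_def one_def mult.assoc sum_distrib_left[symmetric] mod_unit cong: sum.cong_simp)

lemma KK_mult: "x \<in> vsp n \<Longrightarrow> y \<in> vsp n \<Longrightarrow> p < n \<Longrightarrow> l < d \<Longrightarrow> r < d \<Longrightarrow>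
   KK H V (mult H x y) p l r = kmul H V (KK H V x) (KK H V y) p l r"
  by (simp add: PK kmul_def)

lemma antipode_vsp[simp]: "antipode H x \<in> vsp n"
  by (simp add: vsp_def antipode_def)

lemma one_vsp[simp]: "one H \<in> vsp n"
  by (simp add: vsp_def one_def)

abbreviation "Th \<equiv> (\<lambda>k. KK H V (bas k))"
abbreviation "ThS \<equiv> (\<lambda>k. KK H V (antipode H (bas k)))"

lemma cv_ThS_Th: "feq H V (cv H V ThS Th) (Eu H)"
  unfolding feq_def
proof (intro allI impI)
  fix k p l r assume k: "k < n" and p: "p < n" and l: "l < d" and r: "r < d"
  have ms: "mSid H (comult H (bas k)) = (\<lambda>q. counit H (bas k) * one H q)"
    using hopf k unfolding hopf_algebra_def by auto
  have ms2: "mSid H (comult H (bas k)) = (\<lambda>q. \<Sum>a<n. \<Sum>b<n. hdelta H k a b * mult H (antipode H (bas a)) (bas b) q)"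
    using k by (simp add: mSid_def comult_bas cong: sum.cong_simp)
  have "cv H V ThS Th k p l r = (\<Sum>a<n. \<Sum>b<n. hdelta H k a b * KK H V (mult H (antipode H (bas a)) (bas b)) p l r)"
    unfolding cv_def using p l r by (simp add: KK_mult cong: sum.cong_simp)
  also have "\<dots> = KK H V (mSid H (comult H (bas k))) p l r"
    unfolding ms2 KK_lin2 ..
  also have "\<dots> = Eu H k p l r"
    unfolding ms using k p l r by (simp add: KK_scale KK_one counit_bas Eu_def)
  finally show "cv H V ThS Th k p l r = Eu H k p l r" .
qed


lemma delta4:
  assumes "k < n" "x < n" "j < n" "c < n" "c' < n"
  shows "(\<Sum>a<n. \<Sum>b<n. hdelta H k a b * (hdelta H a x j * hdelta H b c c')) =
         (\<Sum>m<n. \<Sum>t<n. hdelta H k x m * (hdelta H m t c' * hdelta H t j c))"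
proof -
  have "(\<Sum>a<n. \<Sum>b<n. hdelta H k a b * (hdelta H a x j * hdelta H b c c')) =
        (\<Sum>b<n. hdelta H b c c' * (\<Sum>a<n. hdelta H k a b * hdelta H a x j))"
    by (subst sum.swap) (simp add: sum_distrib_left mult_ac)
  also have "\<dots> = (\<Sum>b<n. hdelta H b c c' * (\<Sum>a<n. hdelta H k x a * hdelta H a j b))"
    using assms by (simp add: coassoc cong: sum.cong_simp)
  also have "\<dots> = (\<Sum>a<n. hdelta H k x a * (\<Sum>b<n. hdelta H a j b * hdelta H b c c'))"
    by (simp add: sum_distrib_left mult_ac) (subst sum.swap, simp add: mult_ac)
  also have "\<dots> = (\<Sum>a<n. hdelta H k x a * (\<Sum>b<n. hdelta H a b c' * hdelta H b j c))"
    using assms by (simp add: coassoc cong: sum.cong_simp)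
  finally show ?thesis by (simp add: sum_distrib_left mult_ac)
qed


lemma Ry_eq:
  assumes q: "q < n" and m: "m < d"
  shows "kmul H V (tens1 yv) (Rr H V b) q m r = (\<Sum>c<n. \<Sum>c'<n. hdelta H b c c' *
     mult H yv (antipode H (bas c')) q * (\<Sum>t<n. hS H c t * mrho V t m r))"
proof -
  define P where "P = (\<lambda>c. \<Sum>t<n. hS H c t * mrho V t m r)"
  have mu: "mult H yv (antipode H (bas c')) q = (\<Sum>x<n. \<Sum>y<n. yv x * hS H c' y * hmu H x y q)" if "c' < n" for c'
    using q that by (simp add: mult_def antipode_bas cong: sum.cong_simp)
  have "kmul H V (tens1 yv) (Rr H V b) q m r = (\<Sum>x<n. \<Sum>y<n. hmu H x y q * (yv x * Rr H V b y m r))"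
    using m by (simp add: kmul_def tens1_def)
  also have "\<dots> = (\<Sum>x<n. \<Sum>y<n. \<Sum>c<n. \<Sum>c'<n. hdelta H b c c' * (yv x * hS H c' y * hmu H x y q) * P c)"
    unfolding Rr_def P_def by (simp add: sum_distrib_left mult_ac)
  also have "\<dots> = (\<Sum>c<n. \<Sum>c'<n. \<Sum>x<n. \<Sum>y<n. hdelta H b c c' * (yv x * hS H c' y * hmu H x y q) * P c)"
    by (rule permC)
  also have "\<dots> = (\<Sum>c<n. \<Sum>c'<n. hdelta H b c c' * mult H yv (antipode H (bas c')) q * P c)"
    by (simp add: mu sum_distrib_left sum_distrib_right cong: sum.cong_simp)
  finally show ?thesis unfolding P_def .
qed


lemma Gb:
  assumes a: "a < n" and p: "p < n" and l: "l < d"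
  shows "kmul H V (Th a) (\<lambda>q m r. kmul H V (tens1 yv) (Rr H V b) q m r) p l r =
    (\<Sum>x<n. \<Sum>c<n. \<Sum>c'<n. \<Sum>j<n. hdelta H a x j * hdelta H b c c' *
       ((\<Sum>q<n. hmu H x q p * mult H yv (antipode H (bas c')) q) *
        (\<Sum>m<d. mrho V j l m * (\<Sum>t<n. hS H c t * mrho V t m r))))"
proof -
  define P where "P = (\<lambda>c m. \<Sum>t<n. hS H c t * mrho V t m r)"
  define Y where "Y = (\<lambda>c' q. mult H yv (antipode H (bas c')) q)"
  have "kmul H V (Th a) (\<lambda>q m r. kmul H V (tens1 yv) (Rr H V b) q m r) p l r =
     (\<Sum>x<n. \<Sum>q<n. hmu H x q p * (\<Sum>m<d. (\<Sum>j<n. hdelta H a x j * mrho V j l m) *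
        (\<Sum>c<n. \<Sum>c'<n. hdelta H b c c' * Y c' q * P c m)))"
    unfolding kmul_def[of H V "Th a"] P_def Y_def using a
    by (simp add: KK_bas Ry_eq cong: sum.cong_simp)
  also have "\<dots> = (\<Sum>x<n. \<Sum>q<n. \<Sum>m<d. \<Sum>c<n. \<Sum>c'<n. \<Sum>j<n.
      hmu H x q p * ((hdelta H a x j * mrho V j l m) * (hdelta H b c c' * Y c' q * P c m)))"
    by (simp only: sum_distrib_left sum_distrib_right)
  also have "\<dots> = (\<Sum>x<n. \<Sum>c<n. \<Sum>c'<n. \<Sum>j<n. \<Sum>q<n. \<Sum>m<d.
      hmu H x q p * ((hdelta H a x j * mrho V j l m) * (hdelta H b c c' * Y c' q * P c m)))"
    by (rule sum.cong[OF refl], rule permA)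
  also have "\<dots> = (\<Sum>x<n. \<Sum>c<n. \<Sum>c'<n. \<Sum>j<n. hdelta H a x j * hdelta H b c c' *
       ((\<Sum>q<n. hmu H x q p * Y c' q) * (\<Sum>m<d. mrho V j l m * P c m)))"
    by (simp add: sum_distrib_left sum_distrib_right mult_ac)
  finally show ?thesis unfolding P_def Y_def .
qed


lemma Gf:
  assumes t: "t < n" and l: "l < d" and r: "r < d"
  shows "(\<Sum>j<n. \<Sum>c<n. hdelta H t j c * (\<Sum>m<d. mrho V j l m * (\<Sum>t'<n. hS H c t' * mrho V t' m r)))
        = heps H t * (if l = r then 1 else 0)"
proof -
  have "(\<Sum>j<n. \<Sum>c<n. hdelta H t j c * (\<Sum>m<d. mrho V j l m * (\<Sum>t'<n. hS H c t' * mrho V t' m r)))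
      = (\<Sum>j<n. \<Sum>c<n. hdelta H t j c * (\<Sum>t'<n. hS H c t' * (\<Sum>m<d. mrho V j l m * mrho V t' m r)))"
    by (simp add: sum_distrib_left mult_ac) (rule sum.cong[OF refl], rule sum.cong[OF refl], rule sum.swap)
  also have "\<dots> = (\<Sum>j<n. \<Sum>c<n. hdelta H t j c * (\<Sum>t'<n. hS H c t' * (\<Sum>z<n. hmu H j t' z * mrho V z l r)))"
    using l r by (simp add: mod_mult cong: sum.cong_simp)
  also have "\<dots> = (\<Sum>j<n. \<Sum>c<n. \<Sum>t'<n. \<Sum>z<n. hdelta H t j c * (hS H c t' * hmu H j t' z) * mrho V z l r)"
    by (simp add: sum_distrib_left mult_ac)
  also have "\<dots> = (\<Sum>z<n. \<Sum>j<n. \<Sum>c<n. \<Sum>t'<n. hdelta H t j c * (hS H c t' * hmu H j t' z) * mrho V z l r)"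
    by (rule mv3[symmetric])
  also have "\<dots> = (\<Sum>z<n. (\<Sum>j<n. \<Sum>c<n. hdelta H t j c * (\<Sum>t'<n. hS H c t' * hmu H j t' z)) * mrho V z l r)"
    by (simp add: sum_distrib_left sum_distrib_right mult_ac)
  also have "\<dots> = (\<Sum>z<n. heps H t * hunit H z * mrho V z l r)"
    using t by (simp add: antipodeR cong: sum.cong_simp)
  also have "\<dots> = heps H t * (if l = r then 1 else 0)"
    using l r by (simp add: mod_unit sum_distrib_left[symmetric] mult.assoc)
  finally show ?thesis .
qed


lemma mult_assoc_v: "x \<in> vsp n \<Longrightarrow> y \<in> vsp n \<Longrightarrow> z \<in> vsp n \<Longrightarrow>
  mult H (mult H x y) z = mult H x (mult H y z)"
  using hopf unfolding hopf_algebra_def by blast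

lemma G:
  assumes yv: "yv \<in> vsp n" and k: "k < n" and p: "p < n" and l: "l < d" and r: "r < d"
  shows "cv H V Th (\<lambda>b q m r. kmul H V (tens1 yv) (Rr H V b) q m r) k p l r
       = adj H (bas k) yv p * (if l = r then 1 else 0)"
proof -
  define M where "M = (\<lambda>x c'. \<Sum>q<n. hmu H x q p * mult H yv (antipode H (bas c')) q)"
  define N where "N = (\<lambda>j c. \<Sum>m<d. mrho V j l m * (\<Sum>t<n. hS H c t * mrho V t m r))"
  have "cv H V Th (\<lambda>b q m r. kmul H V (tens1 yv) (Rr H V b) q m r) k p l r =
    (\<Sum>a<n. \<Sum>b<n. hdelta H k a b * (\<Sum>x<n. \<Sum>c<n. \<Sum>c'<n. \<Sum>j<n.
       hdelta H a x j * hdelta H b c c' * (M x c' * N j c)))"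
    unfolding cv_def M_def N_def using p l by (simp add: Gb cong: sum.cong_simp)
  also have "\<dots> = (\<Sum>x<n. \<Sum>c<n. \<Sum>c'<n. \<Sum>j<n. \<Sum>a<n. \<Sum>b<n.
      hdelta H k a b * (hdelta H a x j * hdelta H b c c' * (M x c' * N j c)))"
    by (simp only: sum_distrib_left) (rule permB)
  also have "\<dots> = (\<Sum>x<n. \<Sum>c<n. \<Sum>c'<n. \<Sum>j<n.
      (\<Sum>a<n. \<Sum>b<n. hdelta H k a b * (hdelta H a x j * hdelta H b c c')) * (M x c' * N j c))"
    by (simp add: sum_distrib_right sum_distrib_left mult_ac)
  also have "\<dots> = (\<Sum>x<n. \<Sum>c<n. \<Sum>c'<n. \<Sum>j<n.
      (\<Sum>m'<n. \<Sum>t<n. hdelta H k x m' * (hdelta H m' t c' * hdelta H t j c)) * (M x c' * N j c))"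
    using k by (simp add: delta4 cong: sum.cong_simp)
  also have "\<dots> = (\<Sum>x<n. \<Sum>c<n. \<Sum>c'<n. \<Sum>j<n. \<Sum>m'<n. \<Sum>t<n.
      hdelta H k x m' * hdelta H m' t c' * M x c' * (hdelta H t j c * N j c))"
    by (simp add: sum_distrib_right sum_distrib_left mult_ac)
  also have "\<dots> = (\<Sum>x<n. \<Sum>c'<n. \<Sum>m'<n. \<Sum>t<n. \<Sum>j<n. \<Sum>c<n.
      hdelta H k x m' * hdelta H m' t c' * M x c' * (hdelta H t j c * N j c))"
    apply (rule sum.cong[OF refl])
    apply (rule trans[OF mv4])
    apply (rule sum.cong[OF refl])
    apply (rule mv2)
    done
  also have "\<dots> = (\<Sum>x<n. \<Sum>c'<n. \<Sum>m'<n. \<Sum>t<n.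
      hdelta H k x m' * hdelta H m' t c' * M x c' * (\<Sum>j<n. \<Sum>c<n. hdelta H t j c * N j c))"
    by (simp add: sum_distrib_left)
  also have "\<dots> = (\<Sum>x<n. \<Sum>c'<n. \<Sum>m'<n. \<Sum>t<n.
      hdelta H k x m' * hdelta H m' t c' * M x c' * (heps H t * (if l = r then 1 else 0)))"
  proof -
    have "(\<Sum>j<n. \<Sum>c<n. hdelta H t j c * N j c) = heps H t * (if l = r then 1 else 0)" if "t < n" for t
      unfolding N_def by (rule Gf[OF that l r])
    thus ?thesis by (simp cong: sum.cong_simp)
  qed
  also have "\<dots> = (\<Sum>x<n. \<Sum>c'<n. \<Sum>m'<n. hdelta H k x m' * M x c' *
      (\<Sum>t<n. heps H t * hdelta H m' t c') * (if l = r then 1 else 0))"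
    by (simp add: sum_distrib_left sum_distrib_right mult_ac)
  also have "\<dots> = (\<Sum>x<n. \<Sum>c'<n. hdelta H k x c' * M x c') * (if l = r then 1 else 0)"
    by (simp add: counitL sum_distrib_right cong: sum.cong_simp)
  also have "\<dots> = adj H (bas k) yv p * (if l = r then 1 else 0)"
  proof -
    have "mult H (mult H (bas x) yv) (antipode H (bas c')) p = M x c'" if "x < n" "c' < n" for x c'
      unfolding M_def using that yv p by (simp add: mult_assoc_v mult_bas_l mult_ac)
    thus ?thesis using k by (simp add: adj_def comult_bas cong: sum.cong_simp)
  qed
  finally show ?thesis .
qed


lemma mult_one_r: "x \<in> vsp n \<Longrightarrow> mult H x (one H) = x"
  using hopf unfolding hopf_algebra_def by blast

lemma adj_bas_one:
  assumes k: "k < n" and p: "p < n"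
  shows "adj H (bas k) (one H) p = heps H k * hunit H p"
proof -
  have "midS H (comult H (bas k)) = (\<lambda>q. counit H (bas k) * one H q)"
    using hopf k unfolding hopf_algebra_def by auto
  hence "midS H (comult H (bas k)) p = counit H (bas k) * one H p" by metis
  moreover have "adj H (bas k) (one H) p = midS H (comult H (bas k)) p"
    by (simp add: adj_def midS_def mult_one_r cong: sum.cong_simp)
  ultimately show ?thesis using k p by (simp add: counit_bas one_def)
qed

lemma cv_Th_Rr: "feq H V (cv H V Th (Rr H V)) (Eu H)"
proof -
  have "feq H V (Rr H V) (\<lambda>b q m r. kmul H V (tens1 (one H)) (Rr H V b) q m r)"
    unfolding feq_def by (simp add: kmul_unitL)
  hence "feq H V (cv H V Th (Rr H V)) (cv H V Th (\<lambda>b q m r. kmul H V (tens1 (one H)) (Rr H V b) q m r))"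
    by (intro cv_cong) (auto simp: feq_def)
  moreover have "feq H V (cv H V Th (\<lambda>b q m r. kmul H V (tens1 (one H)) (Rr H V b) q m r)) (Eu H)"
    unfolding feq_def
  proof (intro allI impI)
    fix k p l r assume k: "k < n" and p: "p < n" and l: "l < d" and r: "r < d"
    have "cv H V Th (\<lambda>b q m r. kmul H V (tens1 (one H)) (Rr H V b) q m r) k p l r
       = adj H (bas k) (one H) p * (if l = r then 1 else 0)" by (rule G[OF one_vsp k p l r])
    thus "cv H V Th (\<lambda>b q m r. kmul H V (tens1 (one H)) (Rr H V b) q m r) k p l r = Eu H k p l r"
      using k p by (simp add: adj_bas_one[OF k p] Eu_def tens1_def) (simp add: one_def)
  qed
  ultimately show ?thesis by (rule feq_trans)
qed

lemma ThS_Rr: "feq H V ThS (Rr H V)"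
proof -
  have refl: "\<And>F. feq H V F F" by (simp add: feq_def)
  have "feq H V ThS (cv H V ThS (Eu H))" by (rule feq_sym[OF cv_unitR])
  also have "feq H V (cv H V ThS (Eu H)) (cv H V ThS (cv H V Th (Rr H V)))"
    by (rule cv_cong[OF refl feq_sym[OF cv_Th_Rr]])
  also have "feq H V (cv H V ThS (cv H V Th (Rr H V))) (cv H V (cv H V ThS Th) (Rr H V))"
    by (rule feq_sym[OF cv_assoc])
  also have "feq H V (cv H V (cv H V ThS Th) (Rr H V)) (cv H V (Eu H) (Rr H V))"
    by (rule cv_cong[OF cv_ThS_Th refl])
  also have "feq H V (cv H V (Eu H) (Rr H V)) (Rr H V)" by (rule cv_unitL)
  finally show ?thesis .
qed


lemma adj_lin:
  assumes p: "p < n"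
  shows "adj H h a p = (\<Sum>k<n. h k * adj H (bas k) a p)"
proof -
  define Z where "Z = (\<lambda>i j. mult H (mult H (bas i) a) (antipode H (bas j)) p)"
  have "adj H h a p = (\<Sum>i<n. \<Sum>j<n. \<Sum>k<n. h k * hdelta H k i j * Z i j)"
    unfolding adj_def Z_def by (simp add: comult_in sum_distrib_right cong: sum.cong_simp)
  also have "\<dots> = (\<Sum>k<n. \<Sum>i<n. \<Sum>j<n. h k * hdelta H k i j * Z i j)"
    by (rule mv2[symmetric])
  also have "\<dots> = (\<Sum>k<n. h k * adj H (bas k) a p)"
    unfolding adj_def Z_def by (simp add: comult_bas sum_distrib_left mult_ac cong: sum.cong_simp)
  finally show ?thesis .
qed

lemma LKer_adj:
  assumes a: "a \<in> LKer H V \<omega>" and h: "h \<in> vsp n"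
  shows "adj H h a \<in> LKer H V \<omega>"
proof -
  have av: "a \<in> vsp n" and aK: "\<And>p l r. p < n \<Longrightarrow> l < d \<Longrightarrow> r < d \<Longrightarrow>
      KK H V a p l r = \<omega> * a p * (if l = r then 1 else 0)"
    using a by (auto simp: LKer_iff)
  have SR: "\<And>j q m r. j < n \<Longrightarrow> q < n \<Longrightarrow> m < d \<Longrightarrow> r < d \<Longrightarrow> ThS j q m r = Rr H V j q m r"
    using ThS_Rr unfolding feq_def by blast
  define Z where "Z = (\<lambda>i j. mult H (mult H (bas i) a) (antipode H (bas j)))"
  show ?thesis unfolding LKer_iff
  proof (intro conjI allI impI)
    show "adj H h a \<in> vsp n" by (simp add: vsp_def adj_def mult_def)
    fix p l r assume p: "p < n" and l: "l < d" and r: "r < d"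
    have s2: "KK H V (Z i j) p l r = \<omega> * kmul H V (Th i) (\<lambda>q m r. kmul H V (tens1 a) (Rr H V j) q m r) p l r"
      if i: "i < n" and j: "j < n" for i j
    proof -
      have e1: "KK H V (mult H (bas i) a) x l m = \<omega> * kmul H V (Th i) (tens1 a) x l m"
        if "x < n" "m < d" for x m
      proof -
        have "KK H V (mult H (bas i) a) x l m = kmul H V (Th i) (KK H V a) x l m"
          using that i av l by (simp add: KK_mult)
        also have "\<dots> = kmul H V (Th i) (\<lambda>y m' m. \<omega> * tens1 a y m' m) x l m"
          using l that by (intro kmul_cong) (auto simp: aK tens1_def)
        also have "\<dots> = \<omega> * kmul H V (Th i) (tens1 a) x l m" by (rule kmul_scale_r)
        finally show ?thesis .
      qed
      have "KK H V (Z i j) p l r = kmul H V (KK H V (mult H (bas i) a)) (ThS j) p l r"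
        unfolding Z_def using p l r by (simp add: KK_mult)
      also have "\<dots> = kmul H V (\<lambda>x l m. \<omega> * kmul H V (Th i) (tens1 a) x l m) (Rr H V j) p l r"
        using l r j by (intro kmul_cong) (auto simp: e1 SR)
      also have "\<dots> = \<omega> * kmul H V (kmul H V (Th i) (tens1 a)) (Rr H V j) p l r"
        by (rule kmul_scale_l)
      also have "\<dots> = \<omega> * kmul H V (Th i) (\<lambda>q m r. kmul H V (tens1 a) (Rr H V j) q m r) p l r"
        using p by (simp add: kmul_assoc)
      finally show ?thesis .
    qed
    have "KK H V (adj H h a) p l r = (\<Sum>i<n. \<Sum>j<n. comult H h i j * KK H V (Z i j) p l r)"
      unfolding adj_def Z_def by (rule KK_lin2)
    also have "\<dots> = (\<Sum>i<n. \<Sum>j<n. \<Sum>k<n. h k * hdelta H k i j *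
        (\<omega> * kmul H V (Th i) (\<lambda>q m r. kmul H V (tens1 a) (Rr H V j) q m r) p l r))"
      by (simp add: s2 comult_in sum_distrib_right cong: sum.cong_simp)
    also have "\<dots> = (\<Sum>k<n. \<Sum>i<n. \<Sum>j<n. h k * hdelta H k i j *
        (\<omega> * kmul H V (Th i) (\<lambda>q m r. kmul H V (tens1 a) (Rr H V j) q m r) p l r))"
      by (rule mv2[symmetric])
    also have "\<dots> = \<omega> * (\<Sum>k<n. h k * cv H V Th (\<lambda>b q m r. kmul H V (tens1 a) (Rr H V b) q m r) k p l r)"
      unfolding cv_def by (simp add: sum_distrib_left mult_ac)
    also have "\<dots> = \<omega> * (\<Sum>k<n. h k * (adj H (bas k) a p * (if l = r then 1 else 0)))"
      using av p l r by (simp add: G cong: sum.cong_simp)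
    also have "\<dots> = \<omega> * adj H h a p * (if l = r then 1 else 0)"
      using p by (simp add: adj_lin[of p h a] sum_distrib_left sum_distrib_right mult_ac)
    finally show "KK H V (adj H h a) p l r = \<omega> * adj H h a p * (if l = r then 1 else 0)" .
  qed
qed


lemma KK_add: "KK H V (\<lambda>k. x k + y k) p l r = KK H V x p l r + KK H V y p l r"
  by (simp add: KK_def comult_def distrib_left distrib_right sum.distrib)

lemma LKer_zero: "(\<lambda>_. 0) \<in> LKer H V \<omega>"
  by (simp add: LKer_iff vsp_def KK_def comult_def)

lemma LKer_add: "x \<in> LKer H V \<omega> \<Longrightarrow> y \<in> LKer H V \<omega> \<Longrightarrow> (\<lambda>k. x k + y k) \<in> LKer H V \<omega>"
  by (simp add: LKer_iff vsp_def KK_add distrib_left distrib_right)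

lemma LKer_scale: "x \<in> LKer H V \<omega> \<Longrightarrow> (\<lambda>k. c * x k) \<in> LKer H V \<omega>"
  by (simp add: LKer_iff vsp_def KK_scale mult_ac)

lemma LKer_sum: "finite F \<Longrightarrow> (\<forall>x\<in>F. f x \<in> LKer H V \<omega>) \<Longrightarrow> (\<lambda>k. \<Sum>x\<in>F. f x k) \<in> LKer H V \<omega>"
proof (induction F rule: finite_induct)
  case empty thus ?case using LKer_zero by simp
next
  case (insert x F)
  hence "(\<lambda>k. f x k + (\<Sum>x\<in>F. f x k)) \<in> LKer H V \<omega>"
    using LKer_add[of "f x" \<omega> "\<lambda>k. \<Sum>x\<in>F. f x k"] by simp
  thus ?case using insert by simp
qed

lemma LKer_lsub: "lsub n (LKer H V \<omega>)"
  unfolding lsub_def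
proof (intro conjI ballI allI subsetI LKer_zero)
  fix x assume "x \<in> LKer H V \<omega>" thus "x \<in> vsp n" by (simp add: LKer_iff)
next
  fix x y assume "x \<in> LKer H V \<omega>" "y \<in> LKer H V \<omega>"
  thus "(\<lambda>k. x k + y k) \<in> LKer H V \<omega>" by (rule LKer_add)
next
  fix c x assume "x \<in> LKer H V \<omega>"
  thus "(\<lambda>k. c * x k) \<in> LKer H V \<omega>" by (rule LKer_scale)
qed

lemma LKer_left_coideal: "left_coideal H (LKer H V \<omega>)"
  unfolding left_coideal_def using LKer_lsub coideal_LKer by auto

lemma LKer_ad_stable: "ad_stable H (LKer H V \<omega>)"
  unfolding ad_stable_def using LKer_adj by auto

lemma one_LKer: "one H \<in> LKer H V 1"
  unfolding LKer_iff by (simp add: KK_one tens1_def)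


lemma comult_sumF: "comult H (\<lambda>k. \<Sum>w\<in>F. f w k) i j = (\<Sum>w\<in>F. comult H (f w) i j)"
  unfolding comult_def by (auto simp: sum_distrib_right intro!: sum.swap)

lemma mult_sumL: "mult H (\<lambda>k. \<Sum>w\<in>F. f w k) y = (\<lambda>q. \<Sum>w\<in>F. mult H (f w) y q)"
  unfolding mult_def by (intro ext) (auto simp: sum_distrib_right intro!: mv2[symmetric])

lemma mult_sumR: "mult H x (\<lambda>k. \<Sum>w\<in>F. f w k) = (\<lambda>q. \<Sum>w\<in>F. mult H x (f w) q)"
  unfolding mult_def by (intro ext) (auto simp: sum_distrib_right sum_distrib_left mult_ac intro!: mv2[symmetric])

lemma adj_sum: "adj H h (\<lambda>k. \<Sum>w\<in>F. f w k) = (\<lambda>q. \<Sum>w\<in>F. adj H h (f w) q)"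
  unfolding adj_def by (intro ext) (simp add: mult_sumR mult_sumL sum_distrib_left, rule mv2[symmetric])


lemma LKsum_intro: "finite F \<Longrightarrow> F \<subseteq> {w. cmod w = 1} \<Longrightarrow> (\<forall>w\<in>F. a w \<in> LKer H V w) \<Longrightarrow>
   (\<lambda>k. \<Sum>w\<in>F. a w k) \<in> LKsum H V"
  unfolding LKsum_def by blast

lemma LKsum_elim:
  assumes "x \<in> LKsum H V"
  obtains F a where "finite F" "F \<subseteq> {w. cmod w = 1}" "\<forall>w\<in>F. a w \<in> LKer H V w" "x = (\<lambda>k. \<Sum>w\<in>F. a w k)"
  using assms unfolding LKsum_def by blast

lemma LKsum_lsub: "lsub n (LKsum H V)"
  unfolding lsub_def
proof (intro conjI ballI allI subsetI)
  fix x assume "x \<in> LKsum H V"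
  then obtain F a where A: "\<forall>w\<in>F. a w \<in> LKer H V w" "x = (\<lambda>k. \<Sum>w\<in>F. a w k)" by (rule LKsum_elim)
  have "\<forall>w\<in>F. a w \<in> vsp n" using A(1) by (simp add: LKer_iff)
  thus "x \<in> vsp n" using A(2) by (simp add: vsp_def)
next
  show "(\<lambda>_. 0) \<in> LKsum H V" using LKsum_intro[of "{}"] by simp
next
  fix x y assume x: "x \<in> LKsum H V" and y: "y \<in> LKsum H V"
  from x obtain F a where F: "finite F" "F \<subseteq> {w. cmod w = 1}" "\<forall>w\<in>F. a w \<in> LKer H V w" "x = (\<lambda>k. \<Sum>w\<in>F. a w k)"
    by (rule LKsum_elim)
  from y obtain G b where G: "finite G" "G \<subseteq> {w. cmod w = 1}" "\<forall>w\<in>G. b w \<in> LKer H V w" "y = (\<lambda>k. \<Sum>w\<in>G. b w k)"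
    by (rule LKsum_elim)
  define c where "c = (\<lambda>w k. (if w \<in> F then a w k else 0) + (if w \<in> G then b w k else 0))"
  have "\<forall>w\<in>F \<union> G. c w \<in> LKer H V w"
  proof
    fix w assume "w \<in> F \<union> G"
    have A: "(\<lambda>k. if w \<in> F then a w k else 0) \<in> LKer H V w" using F(3) LKer_zero by (cases "w \<in> F") auto
    have B: "(\<lambda>k. if w \<in> G then b w k else 0) \<in> LKer H V w" using G(3) LKer_zero by (cases "w \<in> G") auto
    show "c w \<in> LKer H V w" unfolding c_def using LKer_add[OF A B] .
  qed
  moreover have "(\<lambda>k. x k + y k) = (\<lambda>k. \<Sum>w\<in>F \<union> G. c w k)"
  proof
    fix k
    have "(\<Sum>w\<in>F \<union> G. c w k) = (\<Sum>w\<in>F \<union> G. if w \<in> F then a w k else 0) + (\<Sum>w\<in>F \<union> G. if w \<in> G then b w k else 0)"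
      unfolding c_def by (rule sum.distrib)
    also have "\<dots> = (\<Sum>w\<in>(F \<union> G) \<inter> F. a w k) + (\<Sum>w\<in>(F \<union> G) \<inter> G. b w k)"
      using F(1) G(1) by (simp add: sum.inter_restrict[symmetric])
    also have "\<dots> = x k + y k" using F(4) G(4) by (simp add: Int_absorb1)
    finally show "x k + y k = (\<Sum>w\<in>F \<union> G. c w k)" ..
  qed
  ultimately show "(\<lambda>k. x k + y k) \<in> LKsum H V"
    using F G by (simp add: LKsum_intro)
next
  fix z x assume "x \<in> LKsum H V"
  then obtain F a where F: "finite F" "F \<subseteq> {w. cmod w = 1}" "\<forall>w\<in>F. a w \<in> LKer H V w" "x = (\<lambda>k. \<Sum>w\<in>F. a w k)"
    by (rule LKsum_elim)
  have "(\<lambda>k. z * x k) = (\<lambda>k. \<Sum>w\<in>F. z * a w k)" using F(4) by (simp add: sum_distrib_left)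
  moreover have "\<forall>w\<in>F. (\<lambda>k. z * a w k) \<in> LKer H V w" using F(3) LKer_scale by blast
  ultimately show "(\<lambda>k. z * x k) \<in> LKsum H V" using F(1,2) LKsum_intro[of F "\<lambda>w k. z * a w k"] by simp
qed

lemma LKsum_coideal: "left_coideal H (LKsum H V)"
  unfolding left_coideal_def
proof (intro conjI LKsum_lsub ballI allI impI)
  fix x i assume x: "x \<in> LKsum H V" and i: "i < n"
  from x obtain F a where F: "finite F" "F \<subseteq> {w. cmod w = 1}" "\<forall>w\<in>F. a w \<in> LKer H V w" "x = (\<lambda>k. \<Sum>w\<in>F. a w k)"
    by (rule LKsum_elim)
  have "(\<lambda>j. comult H x i j) = (\<lambda>j. \<Sum>w\<in>F. comult H (a w) i j)" using F(4) by (simp add: comult_sumF)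
  moreover have "\<forall>w\<in>F. (\<lambda>j. comult H (a w) i j) \<in> LKer H V w" using F(3) coideal_LKer i by blast
  ultimately show "(\<lambda>j. comult H x i j) \<in> LKsum H V" using F(1,2) LKsum_intro[of F "\<lambda>w j. comult H (a w) i j"] by simp
qed

lemma LKsum_ad: "ad_stable H (LKsum H V)"
  unfolding ad_stable_def
proof (intro ballI)
  fix h x assume h: "h \<in> vsp n" and x: "x \<in> LKsum H V"
  from x obtain F a where F: "finite F" "F \<subseteq> {w. cmod w = 1}" "\<forall>w\<in>F. a w \<in> LKer H V w" "x = (\<lambda>k. \<Sum>w\<in>F. a w k)"
    by (rule LKsum_elim)
  have "adj H h x = (\<lambda>q. \<Sum>w\<in>F. adj H h (a w) q)" using F(4) by (simp add: adj_sum)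
  moreover have "\<forall>w\<in>F. adj H h (a w) \<in> LKer H V w" using F(3) LKer_adj h by blast
  ultimately show "adj H h x \<in> LKsum H V" using F(1,2) LKsum_intro[of F "\<lambda>w. adj H h (a w)"] by simp
qed

lemma LKsum_subalg: "subalgebra H (LKsum H V)"
  unfolding subalgebra_def
proof (intro conjI LKsum_lsub ballI)
  show "one H \<in> LKsum H V" using LKsum_intro[of "{1}" "\<lambda>_. one H"] one_LKer by simp
next
  fix x y assume x: "x \<in> LKsum H V" and y: "y \<in> LKsum H V"
  from x obtain F a where F: "finite F" "F \<subseteq> {w. cmod w = 1}" "\<forall>w\<in>F. a w \<in> LKer H V w" "x = (\<lambda>k. \<Sum>w\<in>F. a w k)"
    by (rule LKsum_elim)
  from y obtain G b where G: "finite G" "G \<subseteq> {w. cmod w = 1}" "\<forall>w\<in>G. b w \<in> LKer H V w" "y = (\<lambda>k. \<Sum>w\<in>G. b w k)"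
    by (rule LKsum_elim)
  define g where "g = (\<lambda>pr. mult H (a (fst pr)) (b (snd pr)))"
  define hh where "hh = (\<lambda>pr::complex \<times> complex. fst pr * snd pr)"
  define c where "c = (\<lambda>z q. \<Sum>pr\<in>{pr \<in> F \<times> G. hh pr = z}. g pr q)"
  have fin: "finite (F \<times> G)" using F(1) G(1) by simp
  have "mult H x y = (\<lambda>q. \<Sum>w\<in>F. \<Sum>w'\<in>G. mult H (a w) (b w') q)"
    using F(4) G(4) by (simp add: mult_sumL mult_sumR)
  also have "\<dots> = (\<lambda>q. \<Sum>pr\<in>F \<times> G. g pr q)"
    unfolding g_def by (simp add: sum.cartesian_product case_prod_beta')
  also have "\<dots> = (\<lambda>q. \<Sum>z\<in>hh ` (F \<times> G). c z q)"
    unfolding c_def using fin by (intro ext) (rule sum.image_gen)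
  finally have eq: "mult H x y = (\<lambda>q. \<Sum>z\<in>hh ` (F \<times> G). c z q)" .
  have "\<forall>z\<in>hh ` (F \<times> G). c z \<in> LKer H V z"
  proof
    fix z assume "z \<in> hh ` (F \<times> G)"
    have "\<forall>pr\<in>{pr \<in> F \<times> G. hh pr = z}. g pr \<in> LKer H V z"
    proof
      fix pr assume "pr \<in> {pr \<in> F \<times> G. hh pr = z}"
      hence "fst pr \<in> F" "snd pr \<in> G" "fst pr * snd pr = z" unfolding hh_def by auto
      thus "g pr \<in> LKer H V z" unfolding g_def using F(3) G(3) LKer_mult by metis
    qed
    thus "c z \<in> LKer H V z" unfolding c_def using fin by (intro LKer_sum) auto
  qed
  moreover have "hh ` (F \<times> G) \<subseteq> {w. cmod w = 1}"
    using F(2) G(2) unfolding hh_def by (force simp: norm_mult subset_iff)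
  ultimately show "mult H x y \<in> LKsum H V" unfolding eq using fin by (intro LKsum_intro) auto
qed

end

theorem lemma3p1:
  assumes "hopf_algebra H" and "hmodule H V"
  shows "(\<forall>\<omega>. cmod \<omega> = 1 \<and> LKer H V \<omega> \<noteq> {\<lambda>_. 0} \<longrightarrow>
            left_coideal H (LKer H V \<omega>) \<and> ad_stable H (LKer H V \<omega>))
       \<and> (\<forall>\<omega> \<omega>'. cmod \<omega> = 1 \<longrightarrow> cmod \<omega>' = 1 \<longrightarrow>
            (\<forall>a\<in>LKer H V \<omega>. \<forall>b\<in>LKer H V \<omega>'. mult H a b \<in> LKer H V (\<omega> * \<omega>')))
       \<and> (\<forall>\<omega> (l::nat). cmod \<omega> = 1 \<longrightarrow> \<omega> ^ l = 1 \<longrightarrow>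
            LKer H V \<omega> \<subseteq> LKer H (tpow H V l) 1)
       \<and> normal_left_coideal_subalgebra H (LKsum H V)"
proof -
  interpret hctx H V using assms by unfold_locales
  have iii: "LKer H V \<omega> \<subseteq> LKer H (tpow H V l) 1" if "\<omega> ^ l = 1" for \<omega> l
    using LKer_tpow[of _ \<omega> l] that by auto
  show ?thesis
    using LKer_left_coideal LKer_ad_stable LKer_mult iii LKsum_coideal LKsum_subalg LKsum_ad
    unfolding normal_left_coideal_subalgebra_def by blast
qed

end
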